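(* For every odd integer $m\ge 9$ and every odd integer $\Delta\ge m$, there exists an $m$-$\gamma_t$-critical graph $G$ of order $\Delta+m$ with $\Delta(G)=\Delta$ and $\delta(G)\ge 2$.
   Context: All graphs are finite and simple; $\Delta(G)$, $\delta(G)$ are maximum and minimum degree. A set $S\subseteq V(G)$ is a total dominating set if every vertex of $G$ is adjacent to some vertex of $S$; $\gamma_t(G)$ is the minimum size of such a set. A leaf is a vertex of degree one. A graph $G$ with no isolated vertex is $\gamma_t$-critical if for every vertex $v$ not adjacent to a leaf, $\gamma_t(G-v)<\gamma_t(G)$; it is $m$-$\gamma_t$-critical if moreover $\gamma_t(G)=m$. *)

theory Defs
  imports Main
begin

definition simple_graph :: "'a set \<Rightarrow> ('a \<Rightarrow> 'a \<Rightarrow> bool) \<Rightarrow> bool" where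
  "simple_graph V E \<longleftrightarrow> finite V \<and>
     (\<forall>u v. E u v \<longrightarrow> u \<in> V \<and> v \<in> V \<and> u \<noteq> v) \<and>
     (\<forall>u v. E u v \<longrightarrow> E v u)"

definition degree :: "'a set \<Rightarrow> ('a \<Rightarrow> 'a \<Rightarrow> bool) \<Rightarrow> 'a \<Rightarrow> nat" where
  "degree V E v = card {u \<in> V. E v u}"

definition max_degree :: "'a set \<Rightarrow> ('a \<Rightarrow> 'a \<Rightarrow> bool) \<Rightarrow> nat" where
  "max_degree V E = Max (degree V E ` V)"

definition min_degree :: "'a set \<Rightarrow> ('a \<Rightarrow> 'a \<Rightarrow> bool) \<Rightarrow> nat" where
  "min_degree V E = Min (degree V E ` V)"

definition is_leaf :: "'a set \<Rightarrow> ('a \<Rightarrow> 'a \<Rightarrow> bool) \<Rightarrow> 'a \<Rightarrow> bool" where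
  "is_leaf V E v \<longleftrightarrow> v \<in> V \<and> degree V E v = 1"

definition no_isolated :: "'a set \<Rightarrow> ('a \<Rightarrow> 'a \<Rightarrow> bool) \<Rightarrow> bool" where
  "no_isolated V E \<longleftrightarrow> (\<forall>v \<in> V. \<exists>u. E v u)"

definition total_dominating :: "'a set \<Rightarrow> ('a \<Rightarrow> 'a \<Rightarrow> bool) \<Rightarrow> 'a set \<Rightarrow> bool" where
  "total_dominating V E S \<longleftrightarrow> S \<subseteq> V \<and> (\<forall>v \<in> V. \<exists>u \<in> S. E v u)"

definition gamma_t :: "'a set \<Rightarrow> ('a \<Rightarrow> 'a \<Rightarrow> bool) \<Rightarrow> nat" where
  "gamma_t V E = Min (card ` {S. total_dominating V E S})"

definition del_vertex_edges :: "('a \<Rightarrow> 'a \<Rightarrow> bool) \<Rightarrow> 'a \<Rightarrow> 'a \<Rightarrow> 'a \<Rightarrow> bool" where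
  "del_vertex_edges E v = (\<lambda>x y. E x y \<and> x \<noteq> v \<and> y \<noteq> v)"

definition gamma_t_critical :: "'a set \<Rightarrow> ('a \<Rightarrow> 'a \<Rightarrow> bool) \<Rightarrow> bool" where
  "gamma_t_critical V E \<longleftrightarrow> no_isolated V E \<and>
     (\<forall>v \<in> V. \<not> (\<exists>u. E v u \<and> is_leaf V E u) \<longrightarrow>
        gamma_t (V - {v}) (del_vertex_edges E v) < gamma_t V E)"

definition m_gamma_t_critical :: "nat \<Rightarrow> 'a set \<Rightarrow> ('a \<Rightarrow> 'a \<Rightarrow> bool) \<Rightarrow> bool" where
  "m_gamma_t_critical m V E \<longleftrightarrow> gamma_t_critical V E \<and> gamma_t V E = m"

end

theory Submission
  imports Defs "HOL-Library.Countable"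
begin



datatype vtx = Hub | X1 | X2 | Y0 | Ua | Wa | Ub | Wb | Pb nat | Qb nat | U nat | W nat | P nat | Q nat

instance vtx :: countable by countable_datatype

definition VV :: "nat \<Rightarrow> nat \<Rightarrow> vtx set" where
"VV a s = {Hub, X1, X2, Y0, Ua, Wa, Ub, Wb} \<union> Pb ` {..<a} \<union> Qb ` {..<a} \<union> U ` {..<s+2} \<union> W ` {..<s+2} \<union> P ` {..<s+2} \<union> Q ` {..<s+2}"

definition RR :: "nat \<Rightarrow> nat \<Rightarrow> vtx \<Rightarrow> vtx \<Rightarrow> bool" where
"RR a s x y \<longleftrightarrow>
 (x = Hub \<and> (y = X1 \<or> y = X2 \<or> y = Y0 \<or> (\<exists>i<a. y = Pb i \<or> y = Qb i) \<or> (\<exists>j<s+2. y = P j \<or> y = Q j)))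
 \<or> (x = Ua \<and> (y = Wa \<or> y = X1 \<or> y = X2))
 \<or> (x = Wa \<and> y = Y0)
 \<or> (x = Ub \<and> (y = Wb \<or> (\<exists>i<a. y = Pb i)))
 \<or> (x = Wb \<and> (\<exists>i<a. y = Qb i))
 \<or> (x = Y0 \<and> (\<exists>i<a. y = Pb i \<or> y = Qb i))
 \<or> (\<exists>i<a. \<exists>j<a. i \<noteq> j \<and> x = Pb i \<and> y = Qb j)
 \<or> (\<exists>j<s+2. x = U j \<and> (y = W j \<or> y = P j))
 \<or> (\<exists>j<s+2. x = W j \<and> y = Q j)
 \<or> (x = X1 \<and> (y = P 0 \<or> y = Q 0))
 \<or> (x = X2 \<and> (y = P 1 \<or> y = Q 1))"

definition EE :: "nat \<Rightarrow> nat \<Rightarrow> vtx \<Rightarrow> vtx \<Rightarrow> bool" where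
"EE a s x y \<longleftrightarrow> RR a s x y \<or> RR a s y x"

lemma mem_VV: "x \<in> VV a s \<longleftrightarrow> (case x of Pb i \<Rightarrow> i < a | Qb i \<Rightarrow> i < a | U j \<Rightarrow> j < s+2
   | W j \<Rightarrow> j < s+2 | P j \<Rightarrow> j < s+2 | Q j \<Rightarrow> j < s+2 | _ \<Rightarrow> True)"
  by (cases x) (auto simp: VV_def)

lemma E_Hub: "EE a s Hub y \<longleftrightarrow> (y = X1 \<or> y = X2 \<or> y = Y0 \<or> (\<exists>i<a. y = Pb i \<or> y = Qb i) \<or> (\<exists>j<s+2. y = P j \<or> y = Q j))"
  by (auto simp: EE_def RR_def)
lemma E_X1: "EE a s X1 y \<longleftrightarrow> y = Hub \<or> y = Ua \<or> y = P 0 \<or> y = Q 0"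
  by (auto simp: EE_def RR_def)
lemma E_X2: "EE a s X2 y \<longleftrightarrow> y = Hub \<or> y = Ua \<or> y = P 1 \<or> y = Q 1"
  by (auto simp: EE_def RR_def)
lemma E_Y0: "EE a s Y0 y \<longleftrightarrow> y = Hub \<or> y = Wa \<or> (\<exists>i<a. y = Pb i \<or> y = Qb i)"
  by (auto simp: EE_def RR_def)
lemma E_Ua: "EE a s Ua y \<longleftrightarrow> y = Wa \<or> y = X1 \<or> y = X2"
  by (auto simp: EE_def RR_def)
lemma E_Wa: "EE a s Wa y \<longleftrightarrow> y = Ua \<or> y = Y0"
  by (auto simp: EE_def RR_def)
lemma E_Ub: "EE a s Ub y \<longleftrightarrow> y = Wb \<or> (\<exists>i<a. y = Pb i)"
  by (auto simp: EE_def RR_def)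
lemma E_Wb: "EE a s Wb y \<longleftrightarrow> y = Ub \<or> (\<exists>i<a. y = Qb i)"
  by (auto simp: EE_def RR_def)
lemma E_Pb: "EE a s (Pb i) y \<longleftrightarrow> i < a \<and> (y = Hub \<or> y = Ub \<or> y = Y0 \<or> (\<exists>j<a. j \<noteq> i \<and> y = Qb j))"
  by (auto simp: EE_def RR_def)
lemma E_Qb: "EE a s (Qb i) y \<longleftrightarrow> i < a \<and> (y = Hub \<or> y = Wb \<or> y = Y0 \<or> (\<exists>j<a. j \<noteq> i \<and> y = Pb j))"
  by (auto simp: EE_def RR_def)
lemma E_U: "EE a s (U j) y \<longleftrightarrow> j < s+2 \<and> (y = W j \<or> y = P j)"
  by (auto simp: EE_def RR_def)
lemma E_W: "EE a s (W j) y \<longleftrightarrow> j < s+2 \<and> (y = U j \<or> y = Q j)"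
  by (auto simp: EE_def RR_def)
lemma E_P: "EE a s (P j) y \<longleftrightarrow> j < s+2 \<and> (y = Hub \<or> y = U j \<or> (j = 0 \<and> y = X1) \<or> (j = 1 \<and> y = X2))"
  by (auto simp: EE_def RR_def)
lemma E_Q: "EE a s (Q j) y \<longleftrightarrow> j < s+2 \<and> (y = Hub \<or> y = W j \<or> (j = 0 \<and> y = X1) \<or> (j = 1 \<and> y = X2))"
  by (auto simp: EE_def RR_def)

lemmas E_simps = E_Hub E_X1 E_X2 E_Y0 E_Ua E_Wa E_Ub E_Wb E_Pb E_Qb E_U E_W E_P E_Q

lemma EE_sym: "EE a s x y \<Longrightarrow> EE a s y x" by (auto simp: EE_def)




definition BB :: "nat \<Rightarrow> vtx set" where
"BB s = {Ua, Wa, Ub, Wb} \<union> U ` {..<s+2} \<union> W ` {..<s+2}"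

lemma nbB: "b \<in> BB s \<Longrightarrow> b' \<in> BB s \<Longrightarrow> EE a s b z \<Longrightarrow> EE a s b' z \<Longrightarrow> b = b'"
  by (auto simp: BB_def E_simps)

lemma chain:
  assumes dom: "\<And>v. v \<in> VV a s \<Longrightarrow> \<exists>u\<in>S. EE a s v u"
    and hub: "Hub \<notin> S"
    and uniq: "\<And>b z z'. b \<in> BB s \<Longrightarrow> z \<in> S \<Longrightarrow> z' \<in> S \<Longrightarrow> EE a s b z \<Longrightarrow> EE a s b z' \<Longrightarrow> z = z'"
  shows False
proof -
  have BU: "U j \<in> BB s" "W j \<in> BB s" if "j < s+2" for j using that by (auto simp: BB_def)
  have BB4: "Ua \<in> BB s" "Wa \<in> BB s" "Ub \<in> BB s" "Wb \<in> BB s" by (auto simp: BB_def)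
  have small: "P j \<notin> S \<and> Q j \<notin> S" if j: "2 \<le> j" "j < s+2" for j
  proof -
    obtain u where u: "u \<in> S" "EE a s (P j) u" using dom[of "P j"] j by (auto simp: mem_VV)
    have "U j \<in> S" using u hub j by (auto simp: E_simps)
    obtain u' where u': "u' \<in> S" "EE a s (Q j) u'" using dom[of "Q j"] j by (auto simp: mem_VV)
    have "W j \<in> S" using u' hub j by (auto simp: E_simps)
    have "P j \<notin> S"
    proof
      assume "P j \<in> S"
      then have "W j = P j" using uniq[OF BU(1)[OF j(2)] \<open>W j \<in> S\<close>] j by (auto simp: E_simps)
      then show False by simp
    qed
    moreover have "Q j \<notin> S"
    proof
      assume "Q j \<in> S"
      then have "U j = Q j" using uniq[OF BU(2)[OF j(2)] \<open>U j \<in> S\<close>] j by (auto simp: E_simps)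
      then show False by simp
    qed
    ultimately show ?thesis by simp
  qed
  have a01: "P j \<notin> S \<and> Q j \<notin> S" if j: "j < 2" and nx: "(j = 0 \<longrightarrow> X1 \<notin> S) \<and> (j = 1 \<longrightarrow> X2 \<notin> S)" for j
  proof -
    have j2: "j < s+2" using j by simp
    obtain u where u: "u \<in> S" "EE a s (P j) u" using dom[of "P j"] j2 by (auto simp: mem_VV)
    have "U j \<in> S" using u hub nx by (auto simp: E_simps)
    obtain u' where u': "u' \<in> S" "EE a s (Q j) u'" using dom[of "Q j"] j2 by (auto simp: mem_VV)
    have "W j \<in> S" using u' hub nx by (auto simp: E_simps)
    have "P j \<notin> S"
    proof
      assume "P j \<in> S"
      then have "W j = P j" using uniq[OF BU(1)[OF j2] \<open>W j \<in> S\<close>] j2 by (auto simp: E_simps)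
      then show False by simp
    qed
    moreover have "Q j \<notin> S"
    proof
      assume "Q j \<in> S"
      then have "U j = Q j" using uniq[OF BU(2)[OF j2] \<open>U j \<in> S\<close>] j2 by (auto simp: E_simps)
      then show False by simp
    qed
    ultimately show ?thesis by simp
  qed
  have bb: "Pb i \<notin> S \<and> Qb i \<notin> S" if y: "Y0 \<notin> S" and i: "i < a" for i
  proof -
    have "Pb i \<notin> S"
    proof
      assume pi: "Pb i \<in> S"
      obtain u where u: "u \<in> S" "EE a s (Qb i) u" using dom[of "Qb i"] i by (auto simp: mem_VV)
      have "u = Wb \<or> (\<exists>j<a. j \<noteq> i \<and> u = Pb j)" using u hub y by (auto simp: E_simps)
      then show False
      proof
        assume "u = Wb"
        then have "Wb = Pb i" using uniq[OF BB4(3) u(1) pi] i by (auto simp: E_simps)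
        then show False by simp
      next
        assume "\<exists>j<a. j \<noteq> i \<and> u = Pb j"
        then obtain j where "j < a" "j \<noteq> i" "u = Pb j" by blast
        then have "Pb j = Pb i" using uniq[OF BB4(3) u(1) pi] i by (auto simp: E_simps)
        then show False using \<open>j \<noteq> i\<close> by simp
      qed
    qed
    moreover have "Qb i \<notin> S"
    proof
      assume pi: "Qb i \<in> S"
      obtain u where u: "u \<in> S" "EE a s (Pb i) u" using dom[of "Pb i"] i by (auto simp: mem_VV)
      have "u = Ub \<or> (\<exists>j<a. j \<noteq> i \<and> u = Qb j)" using u hub y by (auto simp: E_simps)
      then show False
      proof
        assume "u = Ub"
        then have "Ub = Qb i" using uniq[OF BB4(4) u(1) pi] i by (auto simp: E_simps)
        then show False by simp
      next
        assume "\<exists>j<a. j \<noteq> i \<and> u = Qb j"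
        then obtain j where "j < a" "j \<noteq> i" "u = Qb j" by blast
        then have "Qb j = Qb i" using uniq[OF BB4(4) u(1) pi] i by (auto simp: E_simps)
        then show False using \<open>j \<noteq> i\<close> by simp
      qed
    qed
    ultimately show ?thesis by simp
  qed
  have cc: "Y0 \<in> S" if x: "X1 \<in> S \<or> X2 \<in> S"
  proof (rule ccontr)
    assume y: "Y0 \<notin> S"
    obtain u where u: "u \<in> S" "EE a s Y0 u" using dom[of Y0] by (auto simp: mem_VV)
    have "u = Wa \<or> (\<exists>i<a. u = Pb i \<or> u = Qb i)" using u hub by (auto simp: E_simps)
    then show False
    proof
      assume "u = Wa"
      then show False using x uniq[OF BB4(1) u(1)] by (auto simp: E_simps)
    next
      assume "\<exists>i<a. u = Pb i \<or> u = Qb i"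
      then show False using bb[OF y] u(1) by auto
    qed
  qed
  have dd: "Y0 \<notin> S"
  proof
    assume y: "Y0 \<in> S"
    have nua: "Ua \<notin> S"
    proof
      assume "Ua \<in> S" then show False using uniq[OF BB4(2) y] by (auto simp: E_simps)
    qed
    have x1: "X1 \<in> S"
    proof (rule ccontr)
      assume n: "X1 \<notin> S"
      obtain u where u: "u \<in> S" "EE a s X1 u" using dom[of X1] by (auto simp: mem_VV)
      then show False using a01[of 0] n hub nua by (auto simp: E_simps)
    qed
    have x2: "X2 \<in> S"
    proof (rule ccontr)
      assume n: "X2 \<notin> S"
      obtain u where u: "u \<in> S" "EE a s X2 u" using dom[of X2] by (auto simp: mem_VV)
      then show False using a01[of 1] n hub nua by (auto simp: E_simps)
    qed
    show False using uniq[OF BB4(1) x1 x2] by (auto simp: E_simps)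
  qed
  obtain u where u: "u \<in> S" "EE a s Hub u" using dom[of Hub] by (auto simp: mem_VV)
  have "u = X1 \<or> u = X2 \<or> u = Y0 \<or> (\<exists>i<a. u = Pb i \<or> u = Qb i) \<or> (\<exists>j<s+2. u = P j \<or> u = Q j)"
    using u by (simp add: E_simps)
  moreover have "P j \<notin> S \<and> Q j \<notin> S" if j: "j < s+2" for j
  proof (cases "j < 2")
    case True
    then have "(j = 0 \<longrightarrow> X1 \<notin> S) \<and> (j = 1 \<longrightarrow> X2 \<notin> S)" using cc dd by auto
    then show ?thesis using a01[OF True] by auto
  next
    case False
    then show ?thesis using small[of j] j by auto
  qed
  ultimately show False using cc dd bb[OF dd] u(1) by auto
qed




lemma finite_VV: "finite (VV a s)" by (simp add: VV_def)

lemma card_VV: "card (VV a s) = 16 + 2*a + 4*s"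
  unfolding VV_def
  apply (simp add: card_insert_if image_iff)
  apply (subst card_Un_disjoint, simp, simp, blast)+
  apply (simp add: card_image inj_on_def)
  done
lemma card_BB: "card (BB s) = 8 + 2*s"
  unfolding BB_def
  apply (simp add: card_insert_if image_iff)
  apply (subst card_Un_disjoint, simp, simp, blast)+
  apply (simp add: card_image inj_on_def)
  done

lemma BB_sub: "BB s \<subseteq> VV a s" by (auto simp: BB_def VV_def)

lemma EE_in: "EE a s x y \<Longrightarrow> x \<in> VV a s \<and> y \<in> VV a s"
  by (cases x) (auto simp: E_simps mem_VV)

lemma lower:
  assumes td: "total_dominating (VV a s) (EE a s) S"
  shows "9 + 2*s \<le> card S"
proof (rule ccontr)
  assume lt: "\<not> 9 + 2*s \<le> card S"
  have SV: "S \<subseteq> VV a s" and dom: "\<And>v. v \<in> VV a s \<Longrightarrow> \<exists>u\<in>S. EE a s v u"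
    using td by (auto simp: total_dominating_def)
  have fS: "finite S" using SV finite_VV finite_subset by blast
  have "\<forall>b\<in>BB s. \<exists>u. u \<in> S \<and> EE a s b u" using dom BB_sub by blast
  then obtain g where g: "\<And>b. b \<in> BB s \<Longrightarrow> g b \<in> S \<and> EE a s b (g b)" by metis
  have inj: "inj_on g (BB s)"
    by (rule inj_onI) (metis g nbB)
  have sub: "g ` BB s \<subseteq> S" using g by auto
  have c1: "card (g ` BB s) = 8 + 2*s" using card_image[OF inj] card_BB by simp
  have "card (g ` BB s) \<le> card S" using card_mono[OF fS sub] .
  then have "card (g ` BB s) = card S" using c1 lt by simp
  then have Seq: "g ` BB s = S" using card_subset_eq[OF fS sub] by simp
  have hub: "Hub \<notin> S"
  proof
    assume "Hub \<in> S"
    then obtain b where b: "b \<in> BB s" "Hub = g b" using Seq by blast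
    then have "EE a s b Hub" using g by metis
    then show False using b(1) by (auto simp: BB_def E_simps)
  qed
  have uniq: "z = z'" if hz: "b \<in> BB s" "z \<in> S" "z' \<in> S" "EE a s b z" "EE a s b z'" for b z z'
  proof -
    obtain b1 where b1: "b1 \<in> BB s" "z = g b1" using hz(2) Seq by blast
    obtain b2 where b2: "b2 \<in> BB s" "z' = g b2" using hz(3) Seq by blast
    have "b1 = b" using nbB[OF b1(1) hz(1)] g[OF b1(1)] b1(2) hz(4) by metis
    moreover have "b2 = b" using nbB[OF b2(1) hz(1)] g[OF b2(1)] b2(2) hz(5) by metis
    ultimately show ?thesis using b1 b2 by simp
  qed
  show False
    apply (rule chain[of a s S])
    using dom hub uniq by auto
qed




lemma td_del:
  assumes "T \<subseteq> VV a s - {v}" "\<And>z. z \<in> VV a s \<Longrightarrow> z \<noteq> v \<Longrightarrow> \<exists>t\<in>T. EE a s z t"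
  shows "total_dominating (VV a s - {v}) (del_vertex_edges (EE a s) v) T"
  using assms by (auto simp: total_dominating_def del_vertex_edges_def)

lemma card_ins: "finite A \<Longrightarrow> card (insert x A) \<le> Suc (card A)"
  by (simp add: card_insert_if)

lemma card_BBK: "K \<subseteq> BB s \<Longrightarrow> card (BB s - K) = 8 + 2*s - card K"
  using card_Diff_subset[of K "BB s"] card_BB[of s] finite_subset[of K "BB s"]
  by (simp add: BB_def)

lemma finite_BB: "finite (BB s)" by (simp add: BB_def)


lemma w_Hub: "total_dominating (VV a s - {Hub}) (del_vertex_edges (EE a s) Hub) (BB s)"
  apply (rule td_del)
  subgoal by (auto simp: BB_def VV_def)
  subgoal for z by (cases z) (auto simp: BB_def mem_VV E_simps)
  done

lemma w_Ua: "total_dominating (VV a s - {Ua}) (del_vertex_edges (EE a s) Ua) (insert Hub (insert Y0 (BB s - {Ua, Wa})))"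
  apply (rule td_del)
  subgoal by (auto simp: BB_def VV_def)
  subgoal for z by (cases z) (auto simp: BB_def mem_VV E_simps)
  done
lemma w_Wa: "total_dominating (VV a s - {Wa}) (del_vertex_edges (EE a s) Wa) (insert Hub (insert X1 (BB s - {Ua, Wa})))"
  apply (rule td_del)
  subgoal by (auto simp: BB_def VV_def)
  subgoal for z by (cases z) (auto simp: BB_def mem_VV E_simps)
  done
lemma w_Ub: "0 < a \<Longrightarrow> total_dominating (VV a s - {Ub}) (del_vertex_edges (EE a s) Ub) (insert Hub (insert (Qb 0) (BB s - {Ub, Wb})))"
  apply (rule td_del)
  subgoal by (auto simp: BB_def VV_def)
  subgoal for z by (cases z) (auto simp: BB_def mem_VV E_simps)
  done
lemma w_Wb: "0 < a \<Longrightarrow> total_dominating (VV a s - {Wb}) (del_vertex_edges (EE a s) Wb) (insert Hub (insert (Pb 0) (BB s - {Ub, Wb})))"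
  apply (rule td_del)
  subgoal by (auto simp: BB_def VV_def)
  subgoal for z by (cases z) (auto simp: BB_def mem_VV E_simps)
  done
lemma w_U: "j < s+2 \<Longrightarrow> total_dominating (VV a s - {U j}) (del_vertex_edges (EE a s) (U j)) (insert Hub (insert (Q j) (BB s - {U j, W j})))"
  apply (rule td_del)
  subgoal by (auto simp: BB_def VV_def)
  subgoal for z by (cases z) (auto simp: BB_def mem_VV E_simps)
  done
lemma w_W: "j < s+2 \<Longrightarrow> total_dominating (VV a s - {W j}) (del_vertex_edges (EE a s) (W j)) (insert Hub (insert (P j) (BB s - {U j, W j})))"
  apply (rule td_del)
  subgoal by (auto simp: BB_def VV_def)
  subgoal for z by (cases z) (auto simp: BB_def mem_VV E_simps)
  done
lemma w_Y0: "total_dominating (VV a s - {Y0}) (del_vertex_edges (EE a s) Y0) (insert X1 (BB s - {Wa}))"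
  apply (rule td_del)
  subgoal by (auto simp: BB_def VV_def)
  subgoal for z by (cases z) (auto simp: BB_def mem_VV E_simps)
  done
lemma w_X1: "0 < a \<Longrightarrow> total_dominating (VV a s - {X1}) (del_vertex_edges (EE a s) X1) (insert Y0 (insert X2 (insert (Q 1) (insert (Qb 0) (BB s - {Ua, Wa, U 1, Ub})))))"
  apply (rule td_del)
  subgoal by (auto simp: BB_def VV_def)
  subgoal for z by (cases z) (auto simp: BB_def mem_VV E_simps)
  done
lemma w_X2: "0 < a \<Longrightarrow> total_dominating (VV a s - {X2}) (del_vertex_edges (EE a s) X2) (insert Y0 (insert X1 (insert (Q 0) (insert (Qb 0) (BB s - {Ua, Wa, U 0, Ub})))))"
  apply (rule td_del)
  subgoal by (auto simp: BB_def VV_def)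
  subgoal for z by (cases z) (auto simp: BB_def mem_VV E_simps)
  done
lemma w_P: "j < s+2 \<Longrightarrow> total_dominating (VV a s - {P j}) (del_vertex_edges (EE a s) (P j)) (insert (Q j) (BB s - {U j}))"
  apply (rule td_del)
  subgoal by (auto simp: BB_def VV_def)
  subgoal for z by (cases z) (auto simp: BB_def mem_VV E_simps)
  done
lemma w_Q: "j < s+2 \<Longrightarrow> total_dominating (VV a s - {Q j}) (del_vertex_edges (EE a s) (Q j)) (insert (P j) (BB s - {W j}))"
  apply (rule td_del)
  subgoal by (auto simp: BB_def VV_def)
  subgoal for z by (cases z) (auto simp: BB_def mem_VV E_simps)
  done
lemma w_Pb: "i < a \<Longrightarrow> total_dominating (VV a s - {Pb i}) (del_vertex_edges (EE a s) (Pb i)) (insert (Qb i) (BB s - {Ub}))"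
  apply (rule td_del)
  subgoal by (auto simp: BB_def VV_def)
  subgoal for z by (cases z) (auto simp: BB_def mem_VV E_simps)
  done
lemma w_Qb: "i < a \<Longrightarrow> total_dominating (VV a s - {Qb i}) (del_vertex_edges (EE a s) (Qb i)) (insert (Pb i) (BB s - {Wb}))"
  apply (rule td_del)
  subgoal by (auto simp: BB_def VV_def)
  subgoal for z by (cases z) (auto simp: BB_def mem_VV E_simps)
  done




lemma fin_td: "finite Vs \<Longrightarrow> finite (card ` {S. total_dominating Vs E S})"
proof -
  assume "finite Vs"
  then have "finite (Pow Vs)" by simp
  moreover have "{S. total_dominating Vs E S} \<subseteq> Pow Vs" by (auto simp: total_dominating_def)
  ultimately show ?thesis using finite_subset by blast
qed

lemma gamma_le: "finite Vs \<Longrightarrow> total_dominating Vs E T \<Longrightarrow> gamma_t Vs E \<le> card T"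
  unfolding gamma_t_def by (rule Min_le) (auto simp: fin_td)

lemma gamma_eqI: "finite Vs \<Longrightarrow> total_dominating Vs E T \<Longrightarrow> card T = k \<Longrightarrow> (\<And>S. total_dominating Vs E S \<Longrightarrow> k \<le> card S) \<Longrightarrow> gamma_t Vs E = k"
  unfolding gamma_t_def by (rule Min_eqI) (auto simp: fin_td)

lemma td_main: "total_dominating (VV a s) (EE a s) (insert Y0 (BB s))"
  unfolding total_dominating_def
  apply (intro conjI ballI)
  subgoal by (auto simp: BB_def VV_def)
  subgoal for z by (cases z) (auto simp: BB_def mem_VV E_simps)
  done

lemma gamma_main: "gamma_t (VV a s) (EE a s) = 9 + 2*s"
proof (rule gamma_eqI[OF finite_VV td_main])
  show "card (insert Y0 (BB s)) = 9 + 2*s"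
  proof -
    have "Y0 \<notin> BB s" by (auto simp: BB_def)
    then show ?thesis using card_BB[of s] finite_BB[of s] by (simp add: card_insert_disjoint)
  qed
next
  fix S assume "total_dominating (VV a s) (EE a s) S"
  then show "9 + 2*s \<le> card S" by (rule lower)
qed

lemma small_card:
  assumes "total_dominating (VV a s - {v}) (del_vertex_edges (EE a s) v) T" "card T \<le> 8 + 2*s"
  shows "gamma_t (VV a s - {v}) (del_vertex_edges (EE a s) v) < 9 + 2*s"
  using gamma_le[OF _ assms(1)] assms(2) finite_VV by fastforce

lemma cBK: "K \<subseteq> BB s \<Longrightarrow> card K = k \<Longrightarrow> card (BB s - K) = 8 + 2*s - k"
  using card_BBK by blast

lemma fBK: "finite (BB s - K)" using finite_BB by simp

lemma crit_main:
  assumes a: "0 < a" and v: "v \<in> VV a s"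
  shows "gamma_t (VV a s - {v}) (del_vertex_edges (EE a s) v) < 9 + 2*s"
proof (cases v)
  case Hub then show ?thesis using small_card[OF w_Hub] card_BB by simp
next
  case Ua
  have "card (BB s - {Ua, Wa}) = 8 + 2*s - 2" by (rule cBK) (auto simp: BB_def)
  then have "card (insert Hub (insert Y0 (BB s - {Ua, Wa}))) \<le> 8 + 2*s"
    using card_ins[OF fBK, of Y0 s "{Ua,Wa}"] card_ins[of "insert Y0 (BB s - {Ua, Wa})" Hub] fBK finite_BB by simp
  then show ?thesis using small_card[OF w_Ua] Ua by simp
next
  case Wa
  have "card (BB s - {Ua, Wa}) = 8 + 2*s - 2" by (rule cBK) (auto simp: BB_def)
  then have "card (insert Hub (insert X1 (BB s - {Ua, Wa}))) \<le> 8 + 2*s"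
    using card_ins[OF fBK, of X1 s "{Ua,Wa}"] card_ins[of "insert X1 (BB s - {Ua, Wa})" Hub] fBK finite_BB by simp
  then show ?thesis using small_card[OF w_Wa] Wa by simp
next
  case Ub
  have "card (BB s - {Ub, Wb}) = 8 + 2*s - 2" by (rule cBK) (auto simp: BB_def)
  then have "card (insert Hub (insert (Qb 0) (BB s - {Ub, Wb}))) \<le> 8 + 2*s"
    using card_ins[OF fBK, of "Qb 0" s "{Ub,Wb}"] card_ins[of "insert (Qb 0) (BB s - {Ub, Wb})" Hub] fBK finite_BB by simp
  then show ?thesis using small_card[OF w_Ub[OF a]] Ub by simp
next
  case Wb
  have "card (BB s - {Ub, Wb}) = 8 + 2*s - 2" by (rule cBK) (auto simp: BB_def)
  then have "card (insert Hub (insert (Pb 0) (BB s - {Ub, Wb}))) \<le> 8 + 2*s"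
    using card_ins[OF fBK, of "Pb 0" s "{Ub,Wb}"] card_ins[of "insert (Pb 0) (BB s - {Ub, Wb})" Hub] fBK finite_BB by simp
  then show ?thesis using small_card[OF w_Wb[OF a]] Wb by simp
next
  case (U j)
  then have j: "j < s+2" using v by (simp add: mem_VV)
  have "card (BB s - {U j, W j}) = 8 + 2*s - 2" by (rule cBK) (use j in \<open>auto simp: BB_def\<close>)
  then have "card (insert Hub (insert (Q j) (BB s - {U j, W j}))) \<le> 8 + 2*s"
    using card_ins[OF fBK, of "Q j" s "{U j,W j}"] card_ins[of "insert (Q j) (BB s - {U j, W j})" Hub] fBK finite_BB by simp
  then show ?thesis using small_card[OF w_U[OF j]] U by simp
next
  case (W j)
  then have j: "j < s+2" using v by (simp add: mem_VV)
  have "card (BB s - {U j, W j}) = 8 + 2*s - 2" by (rule cBK) (use j in \<open>auto simp: BB_def\<close>)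
  then have "card (insert Hub (insert (P j) (BB s - {U j, W j}))) \<le> 8 + 2*s"
    using card_ins[OF fBK, of "P j" s "{U j,W j}"] card_ins[of "insert (P j) (BB s - {U j, W j})" Hub] fBK finite_BB by simp
  then show ?thesis using small_card[OF w_W[OF j]] W by simp
next
  case Y0
  have "card (BB s - {Wa}) = 8 + 2*s - 1" by (rule cBK) (auto simp: BB_def)
  then have "card (insert X1 (BB s - {Wa})) \<le> 8 + 2*s"
    using card_ins[OF fBK, of X1 s "{Wa}"] by simp
  then show ?thesis using small_card[OF w_Y0] Y0 by simp
next
  case X1
  have "card (BB s - {Ua, Wa, U 1, Ub}) = 8 + 2*s - 4" by (rule cBK) (auto simp: BB_def)
  then have "card (insert Y0 (insert X2 (insert (Q 1) (insert (Qb 0) (BB s - {Ua, Wa, U 1, Ub}))))) \<le> 8 + 2*s"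
    using card_ins[OF fBK, of "Qb 0" s "{Ua, Wa, U 1, Ub}"]
      card_ins[of "insert (Qb 0) (BB s - {Ua, Wa, U 1, Ub})" "Q 1"]
      card_ins[of "insert (Q 1) (insert (Qb 0) (BB s - {Ua, Wa, U 1, Ub}))" X2]
      card_ins[of "insert X2 (insert (Q 1) (insert (Qb 0) (BB s - {Ua, Wa, U 1, Ub})))" Y0] fBK finite_BB by simp
  then show ?thesis using small_card[OF w_X1[OF a]] X1 by simp
next
  case X2
  have "card (BB s - {Ua, Wa, U 0, Ub}) = 8 + 2*s - 4" by (rule cBK) (auto simp: BB_def)
  then have "card (insert Y0 (insert X1 (insert (Q 0) (insert (Qb 0) (BB s - {Ua, Wa, U 0, Ub}))))) \<le> 8 + 2*s"
    using card_ins[OF fBK, of "Qb 0" s "{Ua, Wa, U 0, Ub}"]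
      card_ins[of "insert (Qb 0) (BB s - {Ua, Wa, U 0, Ub})" "Q 0"]
      card_ins[of "insert (Q 0) (insert (Qb 0) (BB s - {Ua, Wa, U 0, Ub}))" X1]
      card_ins[of "insert X1 (insert (Q 0) (insert (Qb 0) (BB s - {Ua, Wa, U 0, Ub})))" Y0] fBK finite_BB by simp
  then show ?thesis using small_card[OF w_X2[OF a]] X2 by simp
next
  case (P j)
  then have j: "j < s+2" using v by (simp add: mem_VV)
  have "card (BB s - {U j}) = 8 + 2*s - 1" by (rule cBK) (use j in \<open>auto simp: BB_def\<close>)
  then have "card (insert (Q j) (BB s - {U j})) \<le> 8 + 2*s"
    using card_ins[OF fBK, of "Q j" s "{U j}"] by simp
  then show ?thesis using small_card[OF w_P[OF j]] P by simp
next
  case (Q j)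
  then have j: "j < s+2" using v by (simp add: mem_VV)
  have "card (BB s - {W j}) = 8 + 2*s - 1" by (rule cBK) (use j in \<open>auto simp: BB_def\<close>)
  then have "card (insert (P j) (BB s - {W j})) \<le> 8 + 2*s"
    using card_ins[OF fBK, of "P j" s "{W j}"] by simp
  then show ?thesis using small_card[OF w_Q[OF j]] Q by simp
next
  case (Pb i)
  then have i: "i < a" using v by (simp add: mem_VV)
  have "card (BB s - {Ub}) = 8 + 2*s - 1" by (rule cBK) (auto simp: BB_def)
  then have "card (insert (Qb i) (BB s - {Ub})) \<le> 8 + 2*s"
    using card_ins[OF fBK, of "Qb i" s "{Ub}"] by simp
  then show ?thesis using small_card[OF w_Pb[OF i]] Pb by simp
next
  case (Qb i)
  then have i: "i < a" using v by (simp add: mem_VV)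
  have "card (BB s - {Wb}) = 8 + 2*s - 1" by (rule cBK) (auto simp: BB_def)
  then have "card (insert (Pb i) (BB s - {Wb})) \<le> 8 + 2*s"
    using card_ins[OF fBK, of "Pb i" s "{Wb}"] by simp
  then show ?thesis using small_card[OF w_Qb[OF i]] Qb by simp
qed




lemma EE_irr: "\<not> EE a s x x" by (cases x) (auto simp: E_simps)

lemma simple_main: "simple_graph (VV a s) (EE a s)"
  unfolding simple_graph_def using finite_VV EE_in EE_sym EE_irr by metis

lemma nbr_Hub: "{u \<in> VV a s. EE a s Hub u} = {X1, X2, Y0} \<union> Pb ` {..<a} \<union> Qb ` {..<a} \<union> P ` {..<s+2} \<union> Q ` {..<s+2}"
  by (auto simp: E_simps mem_VV)

lemma deg_Hub: "degree (VV a s) (EE a s) Hub = 7 + 2*a + 2*s"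
proof -
  have "card ({X1, X2, Y0} \<union> Pb ` {..<a} \<union> Qb ` {..<a} \<union> P ` {..<s+2} \<union> Q ` {..<s+2}) = 3 + a + a + (s+2) + (s+2)"
    apply (simp add: card_insert_if image_iff)
    apply (subst card_Un_disjoint, simp, simp, blast)+
    apply (simp add: card_image inj_on_def)
    done
  then show ?thesis unfolding degree_def nbr_Hub by simp
qed

lemma cle: "A \<subseteq> B \<Longrightarrow> finite B \<Longrightarrow> card B \<le> k \<Longrightarrow> card A \<le> k"
  using card_mono le_trans by blast

lemma card4: "card {x1, x2, x3, x4::vtx} \<le> 4"
  by (simp add: card_insert_if)

lemma cle4: "A \<subseteq> {x1, x2, x3, x4::vtx} \<Longrightarrow> 4 \<le> k \<Longrightarrow> card A \<le> k"
  using card_mono[of "{x1, x2, x3, x4}" A] card4[of x1 x2 x3 x4] by simp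

lemma deg_le:
  assumes v: "v \<in> VV a s"
  shows "degree (VV a s) (EE a s) v \<le> 7 + 2*a + 2*s"
proof (cases v)
  case Hub then show ?thesis using deg_Hub by simp
next
  case X1 then show ?thesis unfolding degree_def
    by (intro cle4[of _ Hub Ua "P 0" "Q 0"]) (auto simp: E_simps)
next
  case X2 then show ?thesis unfolding degree_def
    by (intro cle4[of _ Hub Ua "P 1" "Q 1"]) (auto simp: E_simps)
next
  case Ua then show ?thesis unfolding degree_def
    by (intro cle4[of _ Wa X1 X2 X2]) (auto simp: E_simps)
next
  case Wa then show ?thesis unfolding degree_def
    by (intro cle4[of _ Ua Y0 Y0 Y0]) (auto simp: E_simps)
next
  case (U j) then show ?thesis unfolding degree_def
    by (intro cle4[of _ "W j" "P j" "P j" "P j"]) (auto simp: E_simps)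
next
  case (W j) then show ?thesis unfolding degree_def
    by (intro cle4[of _ "U j" "Q j" "Q j" "Q j"]) (auto simp: E_simps)
next
  case (P j) then show ?thesis unfolding degree_def
    by (intro cle4[of _ Hub "U j" X1 X2]) (auto simp: E_simps)
next
  case (Q j) then show ?thesis unfolding degree_def
    by (intro cle4[of _ Hub "W j" X1 X2]) (auto simp: E_simps)
next
  case Y0
  have "card ({Hub, Wa} \<union> Pb ` {..<a} \<union> Qb ` {..<a}) \<le> card ({Hub, Wa} \<union> Pb ` {..<a}) + card (Qb ` {..<a})"
    by (rule card_Un_le)
  also have "\<dots> \<le> card {Hub, Wa} + card (Pb ` {..<a}) + card (Qb ` {..<a})"
    using card_Un_le[of "{Hub, Wa}" "Pb ` {..<a}"] by simp
  also have "\<dots> \<le> 2 + a + a"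
    using card_image_le[of "{..<a}" Pb] card_image_le[of "{..<a}" Qb] by (simp add: card_insert_if)
  finally have c: "card ({Hub, Wa} \<union> Pb ` {..<a} \<union> Qb ` {..<a}) \<le> 7 + 2*a + 2*s" by simp
  show ?thesis unfolding degree_def Y0
    by (rule cle[OF _ _ c]) (auto simp: E_simps)
next
  case Ub
  have "card ({Wb} \<union> Pb ` {..<a}) \<le> 1 + a"
    using card_Un_le[of "{Wb}" "Pb ` {..<a}"] card_image_le[of "{..<a}" Pb] by simp
  then have c: "card ({Wb} \<union> Pb ` {..<a}) \<le> 7 + 2*a + 2*s" by simp
  show ?thesis unfolding degree_def Ub
    by (rule cle[OF _ _ c]) (auto simp: E_simps)
next
  case Wb
  have "card ({Ub} \<union> Qb ` {..<a}) \<le> 1 + a"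
    using card_Un_le[of "{Ub}" "Qb ` {..<a}"] card_image_le[of "{..<a}" Qb] by simp
  then have c: "card ({Ub} \<union> Qb ` {..<a}) \<le> 7 + 2*a + 2*s" by simp
  show ?thesis unfolding degree_def Wb
    by (rule cle[OF _ _ c]) (auto simp: E_simps)
next
  case (Pb i)
  have "card ({Hub, Ub, Y0} \<union> Qb ` {..<a}) \<le> 3 + a"
    using card_Un_le[of "{Hub, Ub, Y0}" "Qb ` {..<a}"] card_image_le[of "{..<a}" Qb] card4[of Hub Ub Y0 Y0] by simp
  then have c: "card ({Hub, Ub, Y0} \<union> Qb ` {..<a}) \<le> 7 + 2*a + 2*s" by simp
  show ?thesis unfolding degree_def Pb
    by (rule cle[OF _ _ c]) (auto simp: E_simps)
next
  case (Qb i)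
  have "card ({Hub, Wb, Y0} \<union> Pb ` {..<a}) \<le> 3 + a"
    using card_Un_le[of "{Hub, Wb, Y0}" "Pb ` {..<a}"] card_image_le[of "{..<a}" Pb] card4[of Hub Wb Y0 Y0] by simp
  then have c: "card ({Hub, Wb, Y0} \<union> Pb ` {..<a}) \<le> 7 + 2*a + 2*s" by simp
  show ?thesis unfolding degree_def Qb
    by (rule cle[OF _ _ c]) (auto simp: E_simps)
qed

lemma two_nbrs: "x \<noteq> y \<Longrightarrow> x \<in> VV a s \<Longrightarrow> y \<in> VV a s \<Longrightarrow> EE a s v x \<Longrightarrow> EE a s v y \<Longrightarrow> 2 \<le> degree (VV a s) (EE a s) v"
  unfolding degree_def
  using card_mono[of "{u \<in> VV a s. EE a s v u}" "{x, y}"] finite_VV by auto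

lemma deg_ge:
  assumes a: "0 < a" and v: "v \<in> VV a s"
  shows "2 \<le> degree (VV a s) (EE a s) v"
proof (cases v)
  case Hub then show ?thesis by (intro two_nbrs[of X1 X2]) (auto simp: E_simps mem_VV)
next
  case X1 then show ?thesis by (intro two_nbrs[of Hub Ua]) (auto simp: E_simps mem_VV)
next
  case X2 then show ?thesis by (intro two_nbrs[of Hub Ua]) (auto simp: E_simps mem_VV)
next
  case Y0 then show ?thesis by (intro two_nbrs[of Hub Wa]) (auto simp: E_simps mem_VV)
next
  case Ua then show ?thesis by (intro two_nbrs[of Wa X1]) (auto simp: E_simps mem_VV)
next
  case Wa then show ?thesis by (intro two_nbrs[of Ua Y0]) (auto simp: E_simps mem_VV)
next
  case Ub then show ?thesis using a by (intro two_nbrs[of Wb "Pb 0"]) (auto simp: E_simps mem_VV)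
next
  case Wb then show ?thesis using a by (intro two_nbrs[of Ub "Qb 0"]) (auto simp: E_simps mem_VV)
next
  case (Pb i) then show ?thesis using v by (intro two_nbrs[of Hub Ub]) (auto simp: E_simps mem_VV)
next
  case (Qb i) then show ?thesis using v by (intro two_nbrs[of Hub Wb]) (auto simp: E_simps mem_VV)
next
  case (U j) then show ?thesis using v by (intro two_nbrs[of "W j" "P j"]) (auto simp: E_simps mem_VV)
next
  case (W j) then show ?thesis using v by (intro two_nbrs[of "U j" "Q j"]) (auto simp: E_simps mem_VV)
next
  case (P j) then show ?thesis using v by (intro two_nbrs[of Hub "U j"]) (auto simp: E_simps mem_VV)
next
  case (Q j) then show ?thesis using v by (intro two_nbrs[of Hub "W j"]) (auto simp: E_simps mem_VV)
qed

lemma maxdeg_main: "max_degree (VV a s) (EE a s) = 7 + 2*a + 2*s"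
  unfolding max_degree_def
proof (rule Max_eqI)
  show "finite (degree (VV a s) (EE a s) ` VV a s)" using finite_VV by simp
  show "y \<le> 7 + 2*a + 2*s" if "y \<in> degree (VV a s) (EE a s) ` VV a s" for y
    using that deg_le by auto
  have "Hub \<in> VV a s" by (simp add: mem_VV)
  then show "7 + 2*a + 2*s \<in> degree (VV a s) (EE a s) ` VV a s"
    using deg_Hub[of a s] by (metis image_eqI)
qed

lemma mindeg_main: "0 < a \<Longrightarrow> 2 \<le> min_degree (VV a s) (EE a s)"
  unfolding min_degree_def
  using finite_VV deg_ge[of a] by (subst Min_ge_iff) (auto simp: VV_def)

lemma noiso_main: "0 < a \<Longrightarrow> no_isolated (VV a s) (EE a s)"
  unfolding no_isolated_def
proof
  fix v assume "0 < a" "v \<in> VV a s"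
  then have "2 \<le> card {u \<in> VV a s. EE a s v u}" using deg_ge by (simp add: degree_def)
  then have "{u \<in> VV a s. EE a s v u} \<noteq> {}" by (metis card.empty not_numeral_le_zero)
  then show "\<exists>u. EE a s v u" by blast
qed




definition mapE :: "('a \<Rightarrow> nat) \<Rightarrow> ('a \<Rightarrow> 'a \<Rightarrow> bool) \<Rightarrow> nat \<Rightarrow> nat \<Rightarrow> bool" where
"mapE f E x y \<longleftrightarrow> (\<exists>a b. x = f a \<and> y = f b \<and> E a b)"

lemma mapE_f: "inj f \<Longrightarrow> mapE f E (f a) (f b) = E a b"
  by (auto simp: mapE_def inj_eq)

lemma td_map:
  assumes inj: "inj f"
  shows "total_dominating (f ` Vs) (mapE f E) (f ` S) \<longleftrightarrow> total_dominating Vs E S"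
  unfolding total_dominating_def
  using inj by (auto simp: mapE_f inj_image_subset_iff)

lemma inj_sub: "inj f \<Longrightarrow> inj_on f A" by (rule inj_on_subset[OF _ subset_UNIV])

lemma degree_map: "inj f \<Longrightarrow> degree (f ` Vs) (mapE f E) (f v) = degree Vs E v"
proof -
  assume inj: "inj f"
  have "{u \<in> f ` Vs. mapE f E (f v) u} = f ` {u \<in> Vs. E v u}"
  proof (intro equalityI subsetI)
    fix x assume "x \<in> {u \<in> f ` Vs. mapE f E (f v) u}"
    then obtain u where u: "u \<in> Vs" "x = f u" "mapE f E (f v) (f u)" by blast
    then have "E v u" using mapE_f[OF inj] by metis
    then show "x \<in> f ` {u \<in> Vs. E v u}" using u by blast
  next
    fix x assume "x \<in> f ` {u \<in> Vs. E v u}"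
    then obtain u where u: "u \<in> Vs" "x = f u" "E v u" by blast
    then have "mapE f E (f v) (f u)" using mapE_f[OF inj] by metis
    then show "x \<in> {u \<in> f ` Vs. mapE f E (f v) u}" using u by blast
  qed
  moreover have "inj_on f {u \<in> Vs. E v u}" using inj by (rule inj_sub)
  ultimately show ?thesis unfolding degree_def by (simp only: card_image)
qed

lemma gamma_map:
  assumes inj: "inj f"
  shows "gamma_t (f ` Vs) (mapE f E) = gamma_t Vs E"
proof -
  have ci: "card (f ` S) = card S" for S using inj_sub[OF inj] by (rule card_image)
  have "card ` {S'. total_dominating (f ` Vs) (mapE f E) S'} = card ` {S. total_dominating Vs E S}"
  proof (intro equalityI subsetI)
    fix k assume "k \<in> card ` {S'. total_dominating (f ` Vs) (mapE f E) S'}"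
    then obtain S' where S': "total_dominating (f ` Vs) (mapE f E) S'" "k = card S'" by blast
    define S where "S = {x \<in> Vs. f x \<in> S'}"
    have sub: "S' \<subseteq> f ` Vs" using S' by (simp add: total_dominating_def)
    have eq: "S' = f ` S"
    proof (intro equalityI subsetI)
      fix y assume "y \<in> S'"
      then obtain x where "x \<in> Vs" "y = f x" using sub by blast
      then show "y \<in> f ` S" using \<open>y \<in> S'\<close> unfolding S_def by blast
    next
      fix y assume "y \<in> f ` S" then show "y \<in> S'" unfolding S_def by blast
    qed
    have "total_dominating Vs E S" using S'(1) td_map[OF inj, of Vs E S] eq by simp
    moreover have "k = card S" using S'(2) eq ci by simp
    ultimately show "k \<in> card ` {S. total_dominating Vs E S}" by blast
  next
    fix k assume "k \<in> card ` {S. total_dominating Vs E S}"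
    then obtain S where S: "total_dominating Vs E S" "k = card S" by blast
    have "total_dominating (f ` Vs) (mapE f E) (f ` S)" using S(1) td_map[OF inj] by simp
    moreover have "k = card (f ` S)" using S(2) ci by simp
    ultimately show "k \<in> card ` {S'. total_dominating (f ` Vs) (mapE f E) S'}" by blast
  qed
  then show ?thesis by (simp add: gamma_t_def)
qed

lemma del_map: "inj f \<Longrightarrow> del_vertex_edges (mapE f E) (f v) = mapE f (del_vertex_edges E v)"
  by (auto simp: del_vertex_edges_def mapE_def inj_eq fun_eq_iff)

lemma degimg_map: "inj f \<Longrightarrow> degree (f ` Vs) (mapE f E) ` (f ` Vs) = degree Vs E ` Vs"
  by (auto simp: degree_map image_iff)

theorem main_vtx:
  assumes a: "0 < a"
  shows "\<exists>(V :: nat set) E. simple_graph V E \<and> m_gamma_t_critical (9 + 2*s) V E \<and>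
           card V = 16 + 2*a + 4*s \<and> max_degree V E = 7 + 2*a + 2*s \<and> min_degree V E \<ge> 2"
proof -
  let ?f = "to_nat :: vtx \<Rightarrow> nat"
  have inj: "inj ?f" by simp
  let ?V = "?f ` VV a s" and ?E = "mapE ?f (EE a s)"
  have sg: "simple_graph ?V ?E"
    unfolding simple_graph_def
  proof (intro conjI)
    show "finite ?V" using finite_VV by simp
    show "\<forall>x y. ?E x y \<longrightarrow> x \<in> ?V \<and> y \<in> ?V \<and> x \<noteq> y"
    proof (intro allI impI)
      fix x y assume "?E x y"
      then obtain u v where uv: "x = ?f u" "y = ?f v" "EE a s u v" by (auto simp: mapE_def)
      have "u \<in> VV a s" "v \<in> VV a s" using EE_in[OF uv(3)] by auto
      moreover have "u \<noteq> v" using uv(3) EE_irr by metis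
      ultimately show "x \<in> ?V \<and> y \<in> ?V \<and> x \<noteq> y" using uv inj by (auto simp: inj_eq)
    qed
    show "\<forall>x y. ?E x y \<longrightarrow> ?E y x"
      using EE_sym by (auto simp: mapE_def)
  qed
  have gm: "gamma_t ?V ?E = 9 + 2*s" using gamma_map[OF inj] gamma_main by simp
  have ni: "no_isolated ?V ?E"
    unfolding no_isolated_def
  proof
    fix x assume "x \<in> ?V"
    then obtain v where v: "v \<in> VV a s" "x = ?f v" by blast
    then obtain u where "EE a s v u" using noiso_main[OF a, of s] unfolding no_isolated_def by blast
    then have "?E x (?f u)" using v(2) by (auto simp: mapE_def)
    then show "\<exists>u. ?E x u" by blast
  qed
  have cr: "gamma_t (?V - {x}) (del_vertex_edges ?E x) < gamma_t ?V ?E" if x: "x \<in> ?V" for x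
  proof -
    obtain v where v: "v \<in> VV a s" "x = ?f v" using x by blast
    have "?V - {x} = ?f ` (VV a s - {v})" using v inj by (auto simp: inj_eq)
    then have "gamma_t (?V - {x}) (del_vertex_edges ?E x) = gamma_t (VV a s - {v}) (del_vertex_edges (EE a s) v)"
      using v(2) del_map[OF inj] gamma_map[OF inj] by simp
    then show ?thesis using crit_main[OF a v(1)] gm by simp
  qed
  have mc: "m_gamma_t_critical (9 + 2*s) ?V ?E"
    unfolding m_gamma_t_critical_def gamma_t_critical_def using ni cr gm by blast
  have cV: "card ?V = 16 + 2*a + 4*s" using card_VV card_image[OF inj_sub[OF inj, of "VV a s"]]
    by simp
  have md: "max_degree ?V ?E = 7 + 2*a + 2*s"
    unfolding max_degree_def degimg_map[OF inj] using maxdeg_main by (simp add: max_degree_def)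
  have mn: "min_degree ?V ?E \<ge> 2"
    unfolding min_degree_def degimg_map[OF inj] using mindeg_main[OF a] by (simp add: min_degree_def)
  show ?thesis
    apply (rule exI[of _ ?V])
    apply (rule exI[of _ ?E])
    using sg mc cV md mn by (intro conjI)
qed

theorem mainTheorem8:
  fixes m D :: nat
  assumes "odd m" and "m \<ge> 9" and "odd D" and "D \<ge> m"
  shows "\<exists>(V :: nat set) E. simple_graph V E \<and> m_gamma_t_critical m V E \<and>
           card V = D + m \<and> max_degree V E = D \<and> min_degree V E \<ge> 2"
proof -
  obtain k where k: "m = 2*k+1" using \<open>odd m\<close> by (rule oddE)
  obtain l where l: "D = 2*l+1" using \<open>odd D\<close> by (rule oddE)
  have k4: "4 \<le> k" using k assms(2) by simp
  have lk: "k \<le> l" using k l assms(4) by simp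
  define s where "s = k - 4"
  define a where "a = l - k + 1"
  have ms: "m = 9 + 2*s" using k k4 unfolding s_def by simp
  have Da: "D = 7 + 2*a + 2*s" using l lk k4 unfolding a_def s_def by simp
  have e1: "D + m = 16 + 2*a + 4*s" using ms Da by simp
  have "0 < a" unfolding a_def by simp
  from main_vtx[OF this, of s] obtain V :: "nat set" and E where
    G: "simple_graph V E" "m_gamma_t_critical (9 + 2*s) V E" "card V = 16 + 2*a + 4*s"
       "max_degree V E = 7 + 2*a + 2*s" "2 \<le> min_degree V E" by blast
  have "simple_graph V E \<and> m_gamma_t_critical m V E \<and> card V = D + m \<and> max_degree V E = D \<and> min_degree V E \<ge> 2"
  proof -
    have c2: "m_gamma_t_critical m V E" using G(2) ms by metis
    show ?thesis
    proof (intro conjI)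
      show "simple_graph V E" by (rule G(1))
      show "m_gamma_t_critical m V E" by (rule c2)
      show "card V = D + m" using G(3) e1 by simp
      show "max_degree V E = D" using G(4) Da by simp
      show "2 \<le> min_degree V E" by (rule G(5))
    qed
  qed
  then show ?thesis by blast
qed


end
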